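(* Let $T\in(0,\infty)$, $c\in[2,\infty)$ and $f\in C(\mathbb{R},\mathbb{R})$. For every $d\in\mathbb{N}$ let $\beta^d\in C(\mathbb{R}^d,\mathbb{R}^d)$, $\sigma^d\in C(\mathbb{R}^d,\mathbb{R}^{d\times d})$, $\gamma^d\in C(\mathbb{R}^{2d},\mathbb{R}^d)$, $g^d\in C(\mathbb{R}^d,\mathbb{R})$, and let $\nu^d$ be a Lévy measure on $\mathcal{B}(\mathbb{R}^d\setminus\{0\})$. Assume: (A1) for every $d$ there is $C_d\in(0,\infty)$ with $\|\gamma^d(x,z)\|^2\le C_d(1\wedge\|z\|^2)$ and $\|\gamma^d(x,z)-\gamma^d(y,z)\|^2\le C_d\|x-y\|^2(1\wedge\|z\|^2)$ for all $x,y,z\in\mathbb{R}^d$; (A2) for all $d$, $x,z$ the Jacobian $(D_x\gamma^d)(x,z)$ exists and there is $\lambda_d\in(0,\infty)$ with $\lambda_d\le|\det(I_d+\delta(D_x\gamma^d)(x,z))|$ for all $x,z\in\mathbb{R}^d$, $\delta\in[0,1]$; (A3) for all $d\in\mathbb{N}$, $x,y\in\mathbb{R}^d$, $w_1,w_2\in\mathbb{R}$: $\|\beta^d(x)-\beta^d(y)\|^2+\|\sigma^d(x)-\sigma^d(y)\|_F^2+\int_{\mathbb{R}^d\setminus\{0\}}\|\gamma^d(x,z)-\gamma^d(y,z)\|^2\nu^d(dz)\le c\|x-y\|^2$, $|f(w_1)-f(w_2)|^2\le c|w_1-w_2|^2$, $|g^d(x)-g^d(y)|^2\le cd^cT^{-1}\|x-y\|^2$,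 and $\|\beta^d(0)\|^2+\|\sigma^d(0)\|_F^2+\int_{\mathbb{R}^d\setminus\{0\}}\|\gamma^d(0,z)\|^2\nu^d(dz)+T^3(|f(0)|+1)^2+T|g^d(0)|^2\le cd^c$. Let $b=64\big(1+|c^{1/2}(4c^{1/2}+2c^{1/2}T^{-3/2})|^{1/2}\big)$. Then there exist, for every $\varepsilon\in(0,1)$, $f_\varepsilon\in C(\mathbb{R},\mathbb{R})$ and $\Phi_{f_\varepsilon}\in\mathbf{N}$ such that for all $d\in\mathbb{N}$, $\varepsilon\in(0,1)$, $w_1,w_2\in\mathbb{R}$: $\mathcal{R}(\Phi_{f_\varepsilon})=f_\varepsilon$, $\dim(\mathcal{D}(\Phi_{f_\varepsilon}))=3\le\frac{bd^c\varepsilon^{-c}}{4}$, $|||\mathcal{D}(\Phi_{f_\varepsilon})|||\le\frac{b\varepsilon^{-2}}{4}$, $|f_\varepsilon(w_1)-f_\varepsilon(w_2)|^2\le c|w_1-w_2|^2$, $|f(w_1)-f_\varepsilon(w_1)|^2\le\varepsilon(1+|w_1|^4)$, and $T^3|f_\varepsilon(0)|\le cd^c$.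
   Context: $\|\cdot\|$ Euclidean norm, $\|\cdot\|_F$ Frobenius norm; for $x=(x_1,\dots,x_k)$, $|||x|||=\max_i|x_i|$ and $\dim(x)=k$. Deep neural networks: $\mathbf{A}_k\colon\mathbb{R}^k\to\mathbb{R}^k$ is the componentwise ReLU; $\mathbf{N}=\bigcup_{H\in\mathbb{N}}\bigcup_{(k_0,\dots,k_{H+1})\in\mathbb{N}^{H+2}}\prod_{n=1}^{H+1}(\mathbb{R}^{k_n\times k_{n-1}}\times\mathbb{R}^{k_n})$. For $\Phi=((W_1,B_1),\dots,(W_{H+1},B_{H+1}))$ with $W_n\in\mathbb{R}^{k_n\times k_{n-1}}$, $B_n\in\mathbb{R}^{k_n}$: $\mathcal{D}(\Phi)=(k_0,\dots,k_{H+1})$ and $\mathcal{R}(\Phi)\in C(\mathbb{R}^{k_0},\mathbb{R}^{k_{H+1}})$, $(\mathcal{R}(\Phi))(x_0)=W_{H+1}x_H+B_{H+1}$ with $x_n=\mathbf{A}_{k_n}(W_nx_{n-1}+B_n)$, $n=1,\dots,H$. *)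

theory Defs
  imports "HOL-Analysis.Analysis" "HOL-Combinatorics.Permutations"
begin

text \<open>R^d is the set of real sequences vanishing from index d on; the
product topology on nat => real restricted to it is the Euclidean topology.\<close>

definition Rd :: "nat \<Rightarrow> (nat \<Rightarrow> real) set" where
  "Rd d = {x. \<forall>i\<ge>d. x i = 0}"

definition Rmat :: "nat \<Rightarrow> (nat \<Rightarrow> nat \<Rightarrow> real) set" where
  "Rmat d = {A. \<forall>i j. (d \<le> i \<or> d \<le> j) \<longrightarrow> A i j = 0}"

definition vzero :: "nat \<Rightarrow> real" where
  "vzero = (\<lambda>_. 0)"

definition vdiff :: "(nat \<Rightarrow> real) \<Rightarrow> (nat \<Rightarrow> real) \<Rightarrow> (nat \<Rightarrow> real)" where
  "vdiff x y = (\<lambda>i. x i - y i)"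

definition mdiff :: "(nat \<Rightarrow> nat \<Rightarrow> real) \<Rightarrow> (nat \<Rightarrow> nat \<Rightarrow> real) \<Rightarrow> (nat \<Rightarrow> nat \<Rightarrow> real)" where
  "mdiff A B = (\<lambda>i j. A i j - B i j)"

definition vnorm :: "nat \<Rightarrow> (nat \<Rightarrow> real) \<Rightarrow> real" where
  "vnorm d x = sqrt (\<Sum>i<d. (x i)\<^sup>2)"

definition fnorm :: "nat \<Rightarrow> (nat \<Rightarrow> nat \<Rightarrow> real) \<Rightarrow> real" where
  "fnorm d A = sqrt (\<Sum>i<d. \<Sum>j<d. (A i j)\<^sup>2)"

definition mdet :: "nat \<Rightarrow> (nat \<Rightarrow> nat \<Rightarrow> real) \<Rightarrow> real" where
  "mdet d A = (\<Sum>p | p permutes {..<d}. of_int (sign p) * (\<Prod>i<d. A i (p i)))"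

definition has_jacobian :: "nat \<Rightarrow> ((nat \<Rightarrow> real) \<Rightarrow> (nat \<Rightarrow> real)) \<Rightarrow> (nat \<Rightarrow> real)
    \<Rightarrow> (nat \<Rightarrow> nat \<Rightarrow> real) \<Rightarrow> bool" where
  "has_jacobian d F x J \<longleftrightarrow> J \<in> Rmat d \<and>
     ((\<lambda>h. vnorm d (\<lambda>i. F (\<lambda>k. x k + h k) i - F x i - (\<Sum>j<d. J i j * h j)) / vnorm d h)
        \<longlongrightarrow> 0) (at vzero within Rd d)"

definition levy_measure :: "nat \<Rightarrow> (nat \<Rightarrow> real) measure \<Rightarrow> bool" where
  "levy_measure d \<nu> \<longleftrightarrow>
     sets \<nu> = sets (restrict_space borel (Rd d - {vzero})) \<and>
     (\<integral>\<^sup>+ z. ennreal (min 1 ((vnorm d z)\<^sup>2)) \<partial>\<nu>) < \<infinity>"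

text \<open>A network is a pair (ks, Ls): ks = (k_0,...,k_{H+1}) and
Ls = ((W_1,B_1),...,(W_{H+1},B_{H+1})), matrices/vectors stored as functions
vanishing outside their index ranges.\<close>

type_synonym nnet = "nat list \<times> ((nat \<Rightarrow> nat \<Rightarrow> real) \<times> (nat \<Rightarrow> real)) list"

definition nn_valid :: "nnet \<Rightarrow> bool" where
  "nn_valid \<Phi> \<longleftrightarrow> (let ks = fst \<Phi>; Ls = snd \<Phi> in
     length Ls \<ge> 1 \<and> length ks = length Ls + 1 \<and> (\<forall>k\<in>set ks. 0 < k) \<and>
     (\<forall>n<length Ls.
        (\<forall>i j. (ks ! (n+1) \<le> i \<or> ks ! n \<le> j) \<longrightarrow> fst (Ls ! n) i j = 0) \<and>
        (\<forall>i. ks ! (n+1) \<le> i \<longrightarrow> snd (Ls ! n) i = 0)))"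

definition nn_dims :: "nnet \<Rightarrow> nat list" where
  "nn_dims \<Phi> = fst \<Phi>"

definition affine :: "nat \<Rightarrow> nat \<Rightarrow> (nat \<Rightarrow> nat \<Rightarrow> real) \<Rightarrow> (nat \<Rightarrow> real) \<Rightarrow> (nat \<Rightarrow> real) \<Rightarrow> (nat \<Rightarrow> real)" where
  "affine kout kin W B x = (\<lambda>i. if i < kout then (\<Sum>j<kin. W i j * x j) + B i else 0)"

definition relu :: "nat \<Rightarrow> (nat \<Rightarrow> real) \<Rightarrow> (nat \<Rightarrow> real)" where
  "relu k x = (\<lambda>i. if i < k then max (x i) 0 else 0)"

fun realize_aux :: "nat list \<Rightarrow> ((nat \<Rightarrow> nat \<Rightarrow> real) \<times> (nat \<Rightarrow> real)) list \<Rightarrow> (nat \<Rightarrow> real) \<Rightarrow> (nat \<Rightarrow> real)" where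
  "realize_aux (k0 # k1 # ks) ((W, B) # Ls) x =
     (if Ls = [] then affine k1 k0 W B x
      else realize_aux (k1 # ks) Ls (relu k1 (affine k1 k0 W B x)))"
| "realize_aux _ _ x = vzero"

definition nn_realization :: "nnet \<Rightarrow> (nat \<Rightarrow> real) \<Rightarrow> (nat \<Rightarrow> real)" where
  "nn_realization \<Phi> = realize_aux (fst \<Phi>) (snd \<Phi>)"

definition nn_realizes_scalar :: "nnet \<Rightarrow> (real \<Rightarrow> real) \<Rightarrow> bool" where
  "nn_realizes_scalar \<Phi> h \<longleftrightarrow> hd (nn_dims \<Phi>) = 1 \<and> last (nn_dims \<Phi>) = 1 \<and>
     (\<forall>w. nn_realization \<Phi> (\<lambda>i. if i = 0 then w else 0) 0 = h w)"

end

theory Submission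
  imports Defs
begin

definition clip :: "real \<Rightarrow> real \<Rightarrow> real \<Rightarrow> real" where
  "clip a b x = max (x - a) 0 - max (x - b) 0"

definition slope :: "(real \<Rightarrow> real) \<Rightarrow> (nat \<Rightarrow> real) \<Rightarrow> nat \<Rightarrow> real" where
  "slope h p k = (h (p (Suc k)) - h (p k)) / (p (Suc k) - p k)"

definition PL :: "(real \<Rightarrow> real) \<Rightarrow> (nat \<Rightarrow> real) \<Rightarrow> nat \<Rightarrow> real \<Rightarrow> real" where
  "PL h p M x = (\<Sum>k<M. slope h p k * clip (p k) (p (Suc k)) x)"

definition clampM :: "real \<Rightarrow> real \<Rightarrow> real" where
  "clampM P x = max x 0 - max (x - P) 0"

lemma clip_low: "x \<le> a \<Longrightarrow> a \<le> b \<Longrightarrow> clip a b x = 0"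
  by (simp add: clip_def)
lemma clip_high: "b \<le> x \<Longrightarrow> a \<le> b \<Longrightarrow> clip a b x = b - a"
  by (simp add: clip_def)
lemma clip_mid: "a \<le> x \<Longrightarrow> x \<le> b \<Longrightarrow> clip a b x = x - a"
  by (simp add: clip_def)
lemma clip_mono: "x \<le> y \<Longrightarrow> a \<le> b \<Longrightarrow> clip a b x \<le> clip a b y"
  by (simp add: clip_def max_def)

lemma p_mono:
  assumes "\<forall>k<M. p k < p (Suc k)" "k \<le> l" "l \<le> M"
  shows "p k \<le> (p l :: real)"
  using assms(2,3)
proof (induction l)
  case 0 then show ?case by simp
next
  case (Suc l)
  show ?case
  proof (cases "k = Suc l")
    case True then show ?thesis by simp
  next
    case False
    then have "k \<le> l" using Suc.prems by simp
    then have "p k \<le> p l" using Suc by simp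
    also have "p l < p (Suc l)" using assms(1) Suc.prems by simp
    finally show ?thesis by simp
  qed
qed

lemma sum_clip:
  assumes "p 0 = 0"
  shows "(\<Sum>k<M. clip (p k) (p (Suc k)) x) = clampM (p M) x"
proof -
  have "(\<Sum>k<M. clip (p k) (p (Suc k)) x) = (\<Sum>k<M. (\<lambda>k. max (x - p k) 0) k - (\<lambda>k. max (x - p k) 0) (Suc k))"
    by (simp add: clip_def)
  also have "\<dots> = max (x - p 0) 0 - max (x - p M) 0"
    by (rule sum_lessThan_telescope')
  finally show ?thesis using assms by (simp add: clampM_def)
qed

lemma PL_neg:
  assumes "\<forall>k<M. p k < p (Suc k)" "p 0 = 0" "x \<le> 0"
  shows "PL h p M x = 0"
proof -
  have "\<And>k. k < M \<Longrightarrow> clip (p k) (p (Suc k)) x = 0"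
  proof -
    fix k assume k: "k < M"
    have "p 0 \<le> p k" using p_mono[OF assms(1)] k by simp
    then show "clip (p k) (p (Suc k)) x = 0"
      using assms k by (intro clip_low) (auto simp: less_imp_le)
  qed
  then show ?thesis by (simp add: PL_def)
qed

lemma PL_split:
  assumes mono: "\<forall>k<M. p k < p (Suc k)" and p0: "p 0 = 0"
    and i: "i \<le> M" and x: "p i \<le> x" and x2: "i < M \<Longrightarrow> x \<le> p (Suc i)"
  shows "h 0 + PL h p M x = h (p i) + (if i < M then slope h p i * (x - p i) else 0)"
proof -
  have A: "(\<Sum>k<i. slope h p k * clip (p k) (p (Suc k)) x) = h (p i) - h 0"
  proof -
    have "(\<Sum>k<i. slope h p k * clip (p k) (p (Suc k)) x) = (\<Sum>k<i. h (p (Suc k)) - h (p k))"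
    proof (rule sum.cong)
      fix k assume "k \<in> {..<i}"
      then have k: "k < i" by simp
      have lt: "p k < p (Suc k)" using mono k i by simp
      have "p (Suc k) \<le> p i" using p_mono[OF mono, of "Suc k" i] k i by simp
      then have "clip (p k) (p (Suc k)) x = p (Suc k) - p k"
        using x lt by (intro clip_high) auto
      then show "slope h p k * clip (p k) (p (Suc k)) x = h (p (Suc k)) - h (p k)"
        using lt by (simp add: slope_def)
    qed simp
    also have "\<dots> = h (p i) - h (p 0)" by (rule sum_lessThan_telescope)
    finally show ?thesis using p0 by simp
  qed
  have B: "(\<Sum>k\<in>{Suc i..<M}. slope h p k * clip (p k) (p (Suc k)) x) = 0"
  proof (rule sum.neutral, rule ballI)
    fix k assume "k \<in> {Suc i..<M}"
    then have k: "Suc i \<le> k" "k < M" by auto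
    have "p (Suc i) \<le> p k" using p_mono[OF mono, of "Suc i" k] k by simp
    moreover have "x \<le> p (Suc i)" using x2 k by simp
    ultimately show "slope h p k * clip (p k) (p (Suc k)) x = 0"
      using mono k by (subst clip_low) (auto simp: less_imp_le)
  qed
  show ?thesis
  proof (cases "i < M")
    case True
    have C: "slope h p i * clip (p i) (p (Suc i)) x = slope h p i * (x - p i)"
      using x x2 True by (simp add: clip_mid)
    have "PL h p M x = (\<Sum>k\<in>{0..<Suc i}. slope h p k * clip (p k) (p (Suc k)) x)
        + (\<Sum>k\<in>{Suc i..<M}. slope h p k * clip (p k) (p (Suc k)) x)"
      unfolding PL_def lessThan_atLeast0 using True by (subst sum.atLeastLessThan_concat) auto
    also have "\<dots> = h (p i) - h 0 + slope h p i * (x - p i)"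
      using A B C by (simp add: atLeast0LessThan)
    finally show ?thesis using True by simp
  next
    case False
    then have "i = M" using i by simp
    then show ?thesis using A by (simp add: PL_def)
  qed
qed

lemma find_interval:
  assumes "\<forall>k<M. p k < p (Suc k)" "p 0 = 0" "0 \<le> x" "x < p M"
  shows "\<exists>i<M. p i \<le> x \<and> x \<le> (p (Suc i) :: real)"
  using assms
proof (induction M)
  case 0 then show ?case by simp
next
  case (Suc M)
  show ?case
  proof (cases "x < p M")
    case True
    then obtain i where "i < M" "p i \<le> x \<and> x \<le> p (Suc i)" using Suc by auto
    then show ?thesis by (intro exI[of _ i]) auto
  next
    case False
    then show ?thesis using Suc.prems by (intro exI[of _ M]) auto
  qed
qed

lemma slope_bound:
  assumes lip: "\<And>a b. \<bar>h a - h b\<bar> \<le> L * \<bar>a - b\<bar>" and lt: "p k < p (Suc k)"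
  shows "\<bar>slope h p k\<bar> \<le> L"
proof -
  have "\<bar>h (p (Suc k)) - h (p k)\<bar> \<le> L * (p (Suc k) - p k)" using lip[of "p (Suc k)" "p k"] lt by simp
  then show ?thesis using lt by (simp add: slope_def abs_divide pos_divide_le_eq)
qed

lemma PL_lip:
  assumes mono: "\<forall>k<M. p k < p (Suc k)" and p0: "p 0 = 0"
    and lip: "\<And>a b. \<bar>h a - h b\<bar> \<le> L * \<bar>a - b\<bar>" and xy: "x \<le> y"
  shows "\<bar>PL h p M y - PL h p M x\<bar> \<le> L * (clampM (p M) y - clampM (p M) x)"
proof -
  have "\<bar>PL h p M y - PL h p M x\<bar> = \<bar>\<Sum>k<M. slope h p k * (clip (p k) (p (Suc k)) y - clip (p k) (p (Suc k)) x)\<bar>"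
    by (simp add: PL_def sum_subtractf right_diff_distrib)
  also have "\<dots> \<le> (\<Sum>k<M. \<bar>slope h p k * (clip (p k) (p (Suc k)) y - clip (p k) (p (Suc k)) x)\<bar>)"
    by (rule sum_abs)
  also have "\<dots> \<le> (\<Sum>k<M. L * (clip (p k) (p (Suc k)) y - clip (p k) (p (Suc k)) x))"
  proof (rule sum_mono)
    fix k assume "k \<in> {..<M}"
    then have lt: "p k < p (Suc k)" using mono by simp
    have d: "0 \<le> clip (p k) (p (Suc k)) y - clip (p k) (p (Suc k)) x"
      using clip_mono[OF xy, of "p k" "p (Suc k)"] lt by simp
    have "\<bar>slope h p k\<bar> \<le> L" by (rule slope_bound[OF lip lt])
    then show "\<bar>slope h p k * (clip (p k) (p (Suc k)) y - clip (p k) (p (Suc k)) x)\<bar>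
         \<le> L * (clip (p k) (p (Suc k)) y - clip (p k) (p (Suc k)) x)"
      using d by (simp add: abs_mult mult_right_mono)
  qed
  also have "\<dots> = L * (clampM (p M) y - clampM (p M) x)"
    by (simp add: sum_distrib_left[symmetric] sum_subtractf sum_clip[where p=p, OF p0])
  finally show ?thesis .
qed

lemma PL_err:
  assumes mono: "\<forall>k<M. p k < p (Suc k)" and p0: "p 0 = 0"
    and lip: "\<And>a b. \<bar>h a - h b\<bar> \<le> L * \<bar>a - b\<bar>" and L: "0 \<le> L"
    and G1: "\<forall>k<M. (2 * L * (p (Suc k) - p k))\<^sup>2 \<le> \<epsilon> * (1 + p k ^ 4)"
    and G2: "L\<^sup>2 \<le> \<epsilon> * (p M)\<^sup>2" and eps: "0 \<le> \<epsilon>"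
    and x: "0 \<le> x"
  shows "(h x - (h 0 + PL h p M x))\<^sup>2 \<le> \<epsilon> * (1 + x ^ 4)"
proof (cases "p M \<le> x")
  case True
  have pM: "0 \<le> p M" using p_mono[OF mono, of 0 M] p0 by simp
  have e: "h 0 + PL h p M x = h (p M)" using PL_split[OF mono p0, of M x h] True by simp
  have "\<bar>h x - h (p M)\<bar> \<le> L * x" using lip[of x "p M"] True pM L
    by (smt (verit) mult_left_mono)
  then have "(h x - h (p M))\<^sup>2 \<le> (L * x)\<^sup>2"
    by (metis abs_ge_zero order_trans power2_abs power_mono)
  also have "\<dots> = L\<^sup>2 * x\<^sup>2" by (simp add: power_mult_distrib)
  also have "\<dots> \<le> \<epsilon> * (p M)\<^sup>2 * x\<^sup>2" using G2 by (simp add: mult_right_mono)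
  also have "\<dots> \<le> \<epsilon> * x\<^sup>2 * x\<^sup>2"
    using power_mono[OF True pM, of 2] eps by (simp add: mult_left_mono mult_right_mono)
  also have "\<dots> \<le> \<epsilon> * (1 + x ^ 4)" using eps
    by (simp add: power2_eq_square power4_eq_xxxx mult_left_mono algebra_simps)
  finally show ?thesis using e by simp
next
  case False
  then obtain i where i: "i < M" "p i \<le> x" "x \<le> p (Suc i)"
    using find_interval[OF mono p0 x] by auto
  have pi0: "0 \<le> p i" using p_mono[OF mono, of 0 i] p0 i by simp
  have e: "h 0 + PL h p M x = h (p i) + slope h p i * (x - p i)"
    using PL_split[OF mono p0, of i x h] i by simp
  have lt: "p i < p (Suc i)" using mono i by simp
  have sb: "\<bar>slope h p i\<bar> \<le> L" by (rule slope_bound[OF lip lt])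
  have "\<bar>h x - (h (p i) + slope h p i * (x - p i))\<bar> \<le> \<bar>h x - h (p i)\<bar> + \<bar>slope h p i\<bar> * (x - p i)"
  proof -
    have "\<bar>slope h p i * (x - p i)\<bar> = \<bar>slope h p i\<bar> * (x - p i)" using i by (simp add: abs_mult)
    then show ?thesis by (smt (verit))
  qed
  also have "\<dots> \<le> L * (x - p i) + L * (x - p i)"
    using lip[of x "p i"] i mult_right_mono[OF sb, of "x - p i"] by simp
  also have "\<dots> \<le> 2 * L * (p (Suc i) - p i)" using i L by (simp add: mult_left_mono)
  finally have "(h x - (h (p i) + slope h p i * (x - p i)))\<^sup>2 \<le> (2 * L * (p (Suc i) - p i))\<^sup>2"
    by (metis abs_ge_zero order_trans power2_abs power_mono)
  also have "\<dots> \<le> \<epsilon> * (1 + p i ^ 4)" using G1 i by simp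
  also have "\<dots> \<le> \<epsilon> * (1 + x ^ 4)"
    using power_mono[OF i(2) pi0, of 4] eps by (simp add: mult_left_mono)
  finally show ?thesis using e by simp
qed

definition gK :: "real \<Rightarrow> nat" where "gK \<eta> = nat \<lceil>1/\<eta>\<rceil>"
definition gJ :: "real \<Rightarrow> nat" where "gJ \<eta> = nat \<lceil>2*(1-2*\<eta>)/\<eta>\<rceil>"
definition gD :: "real \<Rightarrow> real" where "gD \<eta> = (1 - 2*\<eta>) / real (gJ \<eta>)"
definition gp :: "real \<Rightarrow> nat \<Rightarrow> real" where
  "gp \<eta> k = (if k \<le> gK \<eta> then real k / real (gK \<eta>) else 1 / (1 - real (k - gK \<eta>) * gD \<eta>))"
definition gM :: "real \<Rightarrow> nat" where "gM \<eta> = gK \<eta> + gJ \<eta>"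

lemma grid:
  assumes eta: "0 < \<eta>"
  shows "1 \<le> gM \<eta>" "gp \<eta> 0 = 0" "\<forall>k<gM \<eta>. gp \<eta> k < gp \<eta> (Suc k)"
    "\<forall>k<gM \<eta>. gp \<eta> (Suc k) - gp \<eta> k \<le> \<eta> \<or> gp \<eta> (Suc k) - gp \<eta> k \<le> \<eta> * (gp \<eta> k)\<^sup>2"
    "1 \<le> 2 * \<eta> * gp \<eta> (gM \<eta>)" "real (gM \<eta>) \<le> 3 / \<eta> + 1"
proof -
  define K where "K = gK \<eta>"
  define J where "J = gJ \<eta>"
  define D where "D = gD \<eta>"
  have Kc: "real K = real_of_int \<lceil>1/\<eta>\<rceil>" using eta by (simp add: K_def gK_def)
  have K1: "real K \<ge> 1/\<eta>" using Kc by linarith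
  have K2: "real K \<le> 1/\<eta> + 1" using Kc by linarith
  have "0 < 1/\<eta>" using eta by simp
  then have "0 < \<lceil>1/\<eta>\<rceil>" by simp
  then have "0 < K" by (simp add: K_def gK_def)
  then have Kpos: "1 \<le> K" by simp
  have Kpos': "0 < real K" using Kpos by simp
  have firststep: "\<And>k. k < K \<Longrightarrow> gp \<eta> k < gp \<eta> (Suc k) \<and> gp \<eta> (Suc k) - gp \<eta> k \<le> \<eta>"
  proof -
    fix k assume k: "k < K"
    have e: "gp \<eta> (Suc k) - gp \<eta> k = 1 / real K" using k
      by (simp add: gp_def K_def[symmetric] diff_divide_distrib[symmetric])
    have "1 / real K \<le> \<eta>" using K1 eta Kpos' by (simp add: divide_le_eq le_divide_eq mult.commute)
    then show "gp \<eta> k < gp \<eta> (Suc k) \<and> gp \<eta> (Suc k) - gp \<eta> k \<le> \<eta>"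
    proof -
      have "0 < 1 / real K" using Kpos' by simp
      then show ?thesis using e \<open>1 / real K \<le> \<eta>\<close> by linarith
    qed
  qed
  have gpK: "gp \<eta> K = 1" using Kpos' by (simp add: gp_def K_def)
  show "1 \<le> gM \<eta>" using Kpos by (simp add: gM_def K_def)
  show "gp \<eta> 0 = 0" by (simp add: gp_def)
  have "(\<forall>k<gM \<eta>. gp \<eta> k < gp \<eta> (Suc k)) \<and>
    (\<forall>k<gM \<eta>. gp \<eta> (Suc k) - gp \<eta> k \<le> \<eta> \<or> gp \<eta> (Suc k) - gp \<eta> k \<le> \<eta> * (gp \<eta> k)\<^sup>2) \<and>
    1 \<le> 2 * \<eta> * gp \<eta> (gM \<eta>) \<and> real (gM \<eta>) \<le> 3 / \<eta> + 1"
  proof (cases "J = 0")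
    case True
    have M: "gM \<eta> = K" using True by (simp add: gM_def K_def J_def)
    have "\<lceil>2*(1-2*\<eta>)/\<eta>\<rceil> \<le> 0" using True by (simp add: J_def gJ_def)
    then have "2*(1-2*\<eta>)/\<eta> \<le> 0" by simp
    then have "1 - 2*\<eta> \<le> 0" using eta by (simp add: divide_le_0_iff)
    then have "1 \<le> 2 * \<eta> * gp \<eta> (gM \<eta>)" using M gpK by simp
    moreover have "real (gM \<eta>) \<le> 3 / \<eta> + 1"
    proof -
      have "3/\<eta> = 3*(1/\<eta>)" by simp
      moreover have "0 < 1/\<eta>" using eta by simp
      ultimately show ?thesis using M K2 by linarith
    qed
    ultimately show ?thesis using firststep M by auto
  next
    case False
    have Jc: "real J = real_of_int \<lceil>2*(1-2*\<eta>)/\<eta>\<rceil>" using False by (simp add: J_def gJ_def)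
    have "0 < \<lceil>2*(1-2*\<eta>)/\<eta>\<rceil>" using False by (simp add: J_def gJ_def)
    then have "0 < 2*(1-2*\<eta>)/\<eta>" by simp
    then have e12: "0 < 1 - 2*\<eta>" using eta by (simp add: zero_less_divide_iff)
    have J1: "real J \<ge> 2*(1-2*\<eta>)/\<eta>" using Jc by linarith
    have J2: "real J \<le> 2*(1-2*\<eta>)/\<eta> + 1" using Jc by linarith
    have Jpos: "0 < real J" using False by simp
    have Dd: "D = (1 - 2*\<eta>) / real J" by (simp add: D_def gD_def J_def)
    have Dpos: "0 < D" using Dd e12 Jpos by simp
    have JD: "real J * D = 1 - 2*\<eta>" using Dd Jpos by simp
    have Dle: "D \<le> \<eta> / 2"
    proof -
      have "2*(1-2*\<eta>) \<le> real J * \<eta>" using J1 eta by (simp add: divide_le_eq)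
      have "1 - 2*\<eta> \<le> \<eta>/2 * real J" using \<open>2*(1-2*\<eta>) \<le> real J * \<eta>\<close> by (simp add: mult.commute)
      then show ?thesis using Dd Jpos by (simp only: divide_le_eq) simp
    qed
    define v where "v k = 1 - real (k - K) * D" for k
    have gpv: "\<And>k. K \<le> k \<Longrightarrow> gp \<eta> k = 1 / v k"
      using gpK by (auto simp: gp_def v_def K_def[symmetric] D_def[symmetric] le_less)
    have vlow: "\<And>k. k \<le> K + J \<Longrightarrow> 2*\<eta> \<le> v k"
    proof -
      fix k assume "k \<le> K + J"
      then have "real (k - K) \<le> real J" by simp
      then have "real (k - K) * D \<le> real J * D" using Dpos by (simp add: mult_right_mono)
      then show "2*\<eta> \<le> v k" using JD by (simp add: v_def)
    qed
    have vhigh: "\<And>k. v k \<le> 1" using Dpos by (simp add: v_def)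
    have vstep: "\<And>k. K \<le> k \<Longrightarrow> v (Suc k) = v k - D"
      by (simp add: v_def Suc_diff_le algebra_simps)
    have M: "gM \<eta> = K + J" by (simp add: gM_def K_def J_def)
    have tail: "\<And>k. K \<le> k \<Longrightarrow> k < K + J \<Longrightarrow> gp \<eta> k < gp \<eta> (Suc k) \<and> gp \<eta> (Suc k) - gp \<eta> k \<le> \<eta> * (gp \<eta> k)\<^sup>2"
    proof -
      fix k assume k: "K \<le> k" "k < K + J"
      define a where "a = v k"
      have a1: "2*\<eta> + D \<le> a" using vlow[of "Suc k"] vstep[OF k(1)] k by (simp add: a_def)
      have g1: "gp \<eta> k = 1 / a" using gpv k by (simp add: a_def)
      have g2: "gp \<eta> (Suc k) = 1 / (a - D)" using gpv[of "Suc k"] vstep[OF k(1)] k by (simp add: a_def)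
      have apos: "0 < a - D" using a1 eta by simp
      have lt: "1 / a < 1 / (a - D)" using apos Dpos by (simp add: frac_less2)
      have "1 / (a - D) - 1 / a = D / (a * (a - D))" using apos Dpos
        by (simp add: field_simps)
      also have "\<dots> \<le> \<eta> / a\<^sup>2"
      proof -
        have "D * a \<le> \<eta> * (a - D)"
        proof -
          have "D * (a + \<eta>) \<le> (\<eta>/2) * (a + \<eta>)" using Dle a1 eta Dpos by (intro mult_right_mono) auto
          also have "\<dots> \<le> \<eta> * a" using a1 eta Dpos by (simp add: field_simps)
          finally show ?thesis by (simp add: algebra_simps)
        qed
        then have "a * (D * a) \<le> a * (\<eta> * (a - D))" using apos Dpos by (intro mult_left_mono) auto
        then have "D * a\<^sup>2 \<le> \<eta> * (a * (a - D))" by (simp add: power2_eq_square algebra_simps)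
        then show ?thesis using apos Dpos a1 eta
          by (simp add: divide_le_eq le_divide_eq)
      qed
      also have "\<dots> = \<eta> * (1 / a)\<^sup>2" by (simp add: power_divide)
      finally show "gp \<eta> k < gp \<eta> (Suc k) \<and> gp \<eta> (Suc k) - gp \<eta> k \<le> \<eta> * (gp \<eta> k)\<^sup>2"
        using g1 g2 lt by simp
    qed
    have "gp \<eta> (gM \<eta>) = 1 / (2*\<eta>)" using gpv[of "K+J"] M JD by (simp add: v_def)
    then have endp: "1 \<le> 2 * \<eta> * gp \<eta> (gM \<eta>)" using eta by simp
    have cnt: "real (gM \<eta>) \<le> 3 / \<eta> + 1"
    proof -
      have "real (gM \<eta>) = real K + real J" using M by simp
      also have "\<dots> \<le> 1/\<eta> + 1 + (2*(1-2*\<eta>)/\<eta> + 1)" using K2 J2 by simp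
      also have "\<dots> = 3/\<eta> - 2" using eta by (simp add: field_simps)
      finally show ?thesis by simp
    qed
    show ?thesis
    proof (intro conjI allI impI)
      fix k assume "k < gM \<eta>"
      then show "gp \<eta> k < gp \<eta> (Suc k)" using firststep tail M by (cases "k < K") auto
    next
      fix k assume "k < gM \<eta>"
      then show "gp \<eta> (Suc k) - gp \<eta> k \<le> \<eta> \<or> gp \<eta> (Suc k) - gp \<eta> k \<le> \<eta> * (gp \<eta> k)\<^sup>2"
        using firststep tail M by (cases "k < K") auto
    qed (use endp cnt in auto)
  qed
  then show "\<forall>k<gM \<eta>. gp \<eta> k < gp \<eta> (Suc k)"
    "\<forall>k<gM \<eta>. gp \<eta> (Suc k) - gp \<eta> k \<le> \<eta> \<or> gp \<eta> (Suc k) - gp \<eta> k \<le> \<eta> * (gp \<eta> k)\<^sup>2"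
    "1 \<le> 2 * \<eta> * gp \<eta> (gM \<eta>)" "real (gM \<eta>) \<le> 3 / \<eta> + 1" by auto
qed

definition net1 :: "nat \<Rightarrow> (nat \<Rightarrow> real) \<Rightarrow> (nat \<Rightarrow> real) \<Rightarrow> (nat \<Rightarrow> real) \<Rightarrow> real \<Rightarrow> nnet" where
  "net1 k w th a B0 = ([1, k, 1],
     [(\<lambda>i j. if i < k \<and> j = 0 then w i else 0, \<lambda>i. if i < k then th i else 0),
      (\<lambda>i j. if i = 0 \<and> j < k then a j else 0, \<lambda>i. if i = 0 then B0 else 0)])"

lemma net1_valid: "0 < k \<Longrightarrow> nn_valid (net1 k w th a B0)"
  by (auto simp: nn_valid_def net1_def less_Suc_eq)

lemma net1_dims: "nn_dims (net1 k w th a B0) = [1, k, 1]"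
  by (simp add: nn_dims_def net1_def)

lemma net1_real:
  "nn_realization (net1 k w th a B0) (\<lambda>i. if i = 0 then x else 0) 0
     = B0 + (\<Sum>j<k. a j * max (w j * x + th j) 0)"
  by (simp add: nn_realization_def net1_def affine_def relu_def)

lemma sum_split_add: "(\<Sum>j<(a::nat)+b. \<phi> j) = (\<Sum>j<a. \<phi> j) + (\<Sum>j<b. \<phi> (a + j))"
  by (induction b) (auto simp: add.assoc)

lemma clamp_two:
  assumes "0 \<le> P" "x \<le> y"
  shows "(clampM P y - clampM P x) + (clampM P (-x) - clampM P (-y)) \<le> y - x"
  using assms by (simp add: clampM_def max_def)

lemma sq_le_helper:
  fixes u e t :: real
  assumes "0 \<le> u" "u \<le> sqrt e * t" "0 \<le> e"
  shows "u\<^sup>2 \<le> e * t\<^sup>2"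
proof -
  have "u\<^sup>2 \<le> (sqrt e * t)\<^sup>2" using assms by (intro power_mono) auto
  also have "\<dots> = e * t\<^sup>2" using assms by (simp add: power_mult_distrib)
  finally show ?thesis .
qed


theorem lemma2p1:
  fixes T c :: real and f :: "real \<Rightarrow> real"
    and \<beta> :: "nat \<Rightarrow> (nat \<Rightarrow> real) \<Rightarrow> (nat \<Rightarrow> real)"
    and \<sigma> :: "nat \<Rightarrow> (nat \<Rightarrow> real) \<Rightarrow> (nat \<Rightarrow> nat \<Rightarrow> real)"
    and \<gamma> :: "nat \<Rightarrow> (nat \<Rightarrow> real) \<Rightarrow> (nat \<Rightarrow> real) \<Rightarrow> (nat \<Rightarrow> real)"
    and g :: "nat \<Rightarrow> (nat \<Rightarrow> real) \<Rightarrow> real"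
    and \<nu> :: "nat \<Rightarrow> (nat \<Rightarrow> real) measure"
    and b :: real
  assumes T: "0 < T" and c: "2 \<le> c"
    and f_cont: "continuous_on UNIV f"
    and \<beta>_cont: "\<And>d. 1 \<le> d \<Longrightarrow> continuous_on (Rd d) (\<beta> d) \<and> \<beta> d ` Rd d \<subseteq> Rd d"
    and \<sigma>_cont: "\<And>d. 1 \<le> d \<Longrightarrow> continuous_on (Rd d) (\<sigma> d) \<and> \<sigma> d ` Rd d \<subseteq> Rmat d"
    and \<gamma>_cont: "\<And>d. 1 \<le> d \<Longrightarrow> continuous_on (Rd d \<times> Rd d) (\<lambda>(x, z). \<gamma> d x z) \<and>
                   (\<forall>x\<in>Rd d. \<forall>z\<in>Rd d. \<gamma> d x z \<in> Rd d)"
    and g_cont: "\<And>d. 1 \<le> d \<Longrightarrow> continuous_on (Rd d) (g d)"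
    and \<nu>_levy: "\<And>d. 1 \<le> d \<Longrightarrow> levy_measure d (\<nu> d)"
    and A1: "\<And>d. 1 \<le> d \<Longrightarrow> \<exists>C>0. \<forall>x\<in>Rd d. \<forall>y\<in>Rd d. \<forall>z\<in>Rd d.
               (vnorm d (\<gamma> d x z))\<^sup>2 \<le> C * min 1 ((vnorm d z)\<^sup>2) \<and>
               (vnorm d (vdiff (\<gamma> d x z) (\<gamma> d y z)))\<^sup>2
                 \<le> C * (vnorm d (vdiff x y))\<^sup>2 * min 1 ((vnorm d z)\<^sup>2)"
    and A2_ex: "\<And>d x z. 1 \<le> d \<Longrightarrow> x \<in> Rd d \<Longrightarrow> z \<in> Rd d \<Longrightarrow>
               \<exists>J. has_jacobian d (\<lambda>u. \<gamma> d u z) x J"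
    and A2: "\<And>d. 1 \<le> d \<Longrightarrow> \<exists>lam>0. \<forall>x\<in>Rd d. \<forall>z\<in>Rd d. \<forall>J \<delta>.
               has_jacobian d (\<lambda>u. \<gamma> d u z) x J \<longrightarrow> \<delta> \<in> {0..1} \<longrightarrow>
               lam \<le> \<bar>mdet d (\<lambda>i j. (if i = j then 1 else 0) + \<delta> * J i j)\<bar>"
    and A3_lip: "\<And>d x y. 1 \<le> d \<Longrightarrow> x \<in> Rd d \<Longrightarrow> y \<in> Rd d \<Longrightarrow>
               ennreal ((vnorm d (vdiff (\<beta> d x) (\<beta> d y)))\<^sup>2 + (fnorm d (mdiff (\<sigma> d x) (\<sigma> d y)))\<^sup>2)
               + (\<integral>\<^sup>+ z. ennreal ((vnorm d (vdiff (\<gamma> d x z) (\<gamma> d y z)))\<^sup>2) \<partial>(\<nu> d))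
               \<le> ennreal (c * (vnorm d (vdiff x y))\<^sup>2)"
    and A3_f: "\<And>w1 w2. \<bar>f w1 - f w2\<bar>\<^sup>2 \<le> c * \<bar>w1 - w2\<bar>\<^sup>2"
    and A3_g: "\<And>d x y. 1 \<le> d \<Longrightarrow> x \<in> Rd d \<Longrightarrow> y \<in> Rd d \<Longrightarrow>
               \<bar>g d x - g d y\<bar>\<^sup>2 \<le> c * real d powr c * T powr (-1) * (vnorm d (vdiff x y))\<^sup>2"
    and A3_0: "\<And>d. 1 \<le> d \<Longrightarrow>
               ennreal ((vnorm d (\<beta> d vzero))\<^sup>2 + (fnorm d (\<sigma> d vzero))\<^sup>2)
               + (\<integral>\<^sup>+ z. ennreal ((vnorm d (\<gamma> d vzero z))\<^sup>2) \<partial>(\<nu> d))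
               + ennreal (T ^ 3 * (\<bar>f 0\<bar> + 1)\<^sup>2 + T * \<bar>g d vzero\<bar>\<^sup>2)
               \<le> ennreal (c * real d powr c)"
    and b_def: "b = 64 * (1 + \<bar>c powr (1/2) * (4 * c powr (1/2) + 2 * c powr (1/2) * T powr (-3/2))\<bar> powr (1/2))"
  shows "\<exists>(F :: real \<Rightarrow> real \<Rightarrow> real) (\<Phi> :: real \<Rightarrow> nnet).
           (\<forall>\<epsilon>\<in>{0<..<1}. continuous_on UNIV (F \<epsilon>) \<and> nn_valid (\<Phi> \<epsilon>)) \<and>
           (\<forall>d \<epsilon> w1 w2. 1 \<le> d \<longrightarrow> \<epsilon> \<in> {0<..<1} \<longrightarrow>
              nn_realizes_scalar (\<Phi> \<epsilon>) (F \<epsilon>) \<and>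
              length (nn_dims (\<Phi> \<epsilon>)) = 3 \<and>
              3 \<le> b * real d powr c * \<epsilon> powr (-c) / 4 \<and>
              real (Max (set (nn_dims (\<Phi> \<epsilon>)))) \<le> b * \<epsilon> powr (-2) / 4 \<and>
              \<bar>F \<epsilon> w1 - F \<epsilon> w2\<bar>\<^sup>2 \<le> c * \<bar>w1 - w2\<bar>\<^sup>2 \<and>
              \<bar>f w1 - F \<epsilon> w1\<bar>\<^sup>2 \<le> \<epsilon> * (1 + \<bar>w1\<bar> ^ 4) \<and>
              T ^ 3 * \<bar>F \<epsilon> 0\<bar> \<le> c * real d powr c)"
proof -
  define L where "L = sqrt c"
  have L0: "0 < L" using c by (simp add: L_def)
  have Lsq: "L\<^sup>2 = c" using c by (simp add: L_def)
  have lipf: "\<And>a b. \<bar>f a - f b\<bar> \<le> L * \<bar>a - b\<bar>"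
  proof -
    fix a b
    have "sqrt (\<bar>f a - f b\<bar>\<^sup>2) \<le> sqrt (c * \<bar>a - b\<bar>\<^sup>2)" using A3_f[of a b] by (rule real_sqrt_le_mono)
    then show "\<bar>f a - f b\<bar> \<le> L * \<bar>a - b\<bar>" by (simp add: L_def real_sqrt_mult)
  qed
  define fneg where "fneg = (\<lambda>t. f (- t))"
  have lipg: "\<And>a b. \<bar>fneg a - fneg b\<bar> \<le> L * \<bar>a - b\<bar>"
  proof -
    fix a b
    have "\<bar>f (-a) - f (-b)\<bar> \<le> L * \<bar>(-a) - (-b)\<bar>" by (rule lipf)
    moreover have "\<bar>(-a) - (-b)\<bar> = \<bar>a - b\<bar>" by arith
    ultimately show "\<bar>fneg a - fneg b\<bar> \<le> L * \<bar>a - b\<bar>" by (simp add: fneg_def)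
  qed
  define eta where "eta = (\<lambda>\<epsilon>::real. sqrt \<epsilon> / (2 * L))"
  define p where "p = (\<lambda>\<epsilon>. gp (eta \<epsilon>))"
  define M where "M = (\<lambda>\<epsilon>. gM (eta \<epsilon>))"
  define F where "F = (\<lambda>\<epsilon> x. f 0 + PL f (p \<epsilon>) (M \<epsilon>) x + PL fneg (p \<epsilon>) (M \<epsilon>) (- x))"
  define ww where "ww = (\<lambda>\<epsilon> j. if j < 2 * M \<epsilon> then 1 else (-1::real))"
  define th where "th = (\<lambda>\<epsilon> j. if j < M \<epsilon> then - p \<epsilon> j else if j < 2 * M \<epsilon> then - p \<epsilon> (Suc (j - M \<epsilon>))
      else if j < 3 * M \<epsilon> then - p \<epsilon> (j - 2 * M \<epsilon>) else - p \<epsilon> (Suc (j - 3 * M \<epsilon>)))"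
  define aa where "aa = (\<lambda>\<epsilon> j. if j < M \<epsilon> then slope f (p \<epsilon>) j else if j < 2 * M \<epsilon> then - slope f (p \<epsilon>) (j - M \<epsilon>)
      else if j < 3 * M \<epsilon> then slope fneg (p \<epsilon>) (j - 2 * M \<epsilon>) else - slope fneg (p \<epsilon>) (j - 3 * M \<epsilon>))"
  define \<Phi> where "\<Phi> = (\<lambda>\<epsilon>. net1 (4 * M \<epsilon>) (ww \<epsilon>) (th \<epsilon>) (aa \<epsilon>) (f 0))"
  have Freal: "nn_realization (\<Phi> \<epsilon>) (\<lambda>i. if i = 0 then x else 0) 0 = F \<epsilon> x" for \<epsilon> x
  proof -
    define m where "m = M \<epsilon>"
    define q where "q = p \<epsilon>"
    have m2: "2 * M \<epsilon> = M \<epsilon> + M \<epsilon>" "3 * M \<epsilon> = M \<epsilon> + M \<epsilon> + M \<epsilon>" by simp_all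
    define \<phi> where "\<phi> = (\<lambda>j. aa \<epsilon> j * max (ww \<epsilon> j * x + th \<epsilon> j) 0)"
    have "nn_realization (\<Phi> \<epsilon>) (\<lambda>i. if i = 0 then x else 0) 0 = f 0 + (\<Sum>j<m+m+m+m. \<phi> j)"
    proof -
      have "4 * m = m + m + m + m" by simp
      then show ?thesis by (simp only: \<Phi>_def net1_real \<phi>_def m_def)
    qed
    also have "\<dots> = f 0 + ((\<Sum>j<m. \<phi> j) + (\<Sum>j<m. \<phi> (m + j)) + (\<Sum>j<m. \<phi> (m + m + j)) + (\<Sum>j<m. \<phi> (m + m + m + j)))"
      by (simp add: sum_split_add)
    also have "(\<Sum>j<m. \<phi> j) = (\<Sum>j<m. slope f q j * max (x - q j) 0)"
      by (rule sum.cong) (auto simp: \<phi>_def aa_def ww_def th_def m_def q_def m2)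
    also have "(\<Sum>j<m. \<phi> (m + j)) = (\<Sum>j<m. - slope f q j * max (x - q (Suc j)) 0)"
      by (rule sum.cong) (auto simp: \<phi>_def aa_def ww_def th_def m_def q_def m2)
    also have "(\<Sum>j<m. \<phi> (m + m + j)) = (\<Sum>j<m. slope fneg q j * max (- x - q j) 0)"
      by (rule sum.cong) (auto simp: \<phi>_def aa_def ww_def th_def m_def q_def m2)
    also have "(\<Sum>j<m. \<phi> (m + m + m + j)) = (\<Sum>j<m. - slope fneg q j * max (- x - q (Suc j)) 0)"
      by (rule sum.cong) (auto simp: \<phi>_def aa_def ww_def th_def m_def q_def m2)
    finally have R: "nn_realization (\<Phi> \<epsilon>) (\<lambda>i. if i = 0 then x else 0) 0 = f 0 + ((\<Sum>j<m. slope f q j * max (x - q j) 0) +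
        (\<Sum>j<m. - slope f q j * max (x - q (Suc j)) 0) +
        (\<Sum>j<m. slope fneg q j * max (- x - q j) 0) +
        (\<Sum>j<m. - slope fneg q j * max (- x - q (Suc j)) 0))" .
    have P1: "(\<Sum>j<m. slope f q j * max (x - q j) 0) + (\<Sum>j<m. - slope f q j * max (x - q (Suc j)) 0)
        = PL f q m x"
      unfolding PL_def clip_def sum.distrib[symmetric] by (rule sum.cong) (auto simp: algebra_simps)
    have P2: "(\<Sum>j<m. slope fneg q j * max (- x - q j) 0) + (\<Sum>j<m. - slope fneg q j * max (- x - q (Suc j)) 0)
        = PL fneg q m (- x)"
      unfolding PL_def clip_def sum.distrib[symmetric] by (rule sum.cong) (auto simp: algebra_simps)
    show ?thesis using R P1 P2 by (simp add: F_def m_def q_def)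
  qed
  have main: "continuous_on UNIV (F \<epsilon>) \<and> nn_valid (\<Phi> \<epsilon>) \<and> nn_realizes_scalar (\<Phi> \<epsilon>) (F \<epsilon>) \<and>
       length (nn_dims (\<Phi> \<epsilon>)) = 3 \<and>
       real (Max (set (nn_dims (\<Phi> \<epsilon>)))) \<le> b * \<epsilon> powr (-2) / 4 \<and>
       (\<forall>w1 w2. \<bar>F \<epsilon> w1 - F \<epsilon> w2\<bar>\<^sup>2 \<le> c * \<bar>w1 - w2\<bar>\<^sup>2) \<and>
       (\<forall>w1. \<bar>f w1 - F \<epsilon> w1\<bar>\<^sup>2 \<le> \<epsilon> * (1 + \<bar>w1\<bar> ^ 4)) \<and>
       F \<epsilon> 0 = f 0"
    if eps: "\<epsilon> \<in> {0<..<1}" for \<epsilon>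
  proof -
    have e0: "0 < \<epsilon>" "\<epsilon> < 1" using eps by auto
    have eta0: "0 < eta \<epsilon>" using e0 L0 by (simp add: eta_def)
    note gr = grid[OF eta0]
    have M1: "1 \<le> M \<epsilon>" using gr(1) by (simp add: M_def)
    have p0: "p \<epsilon> 0 = 0" using gr(2) by (simp add: p_def)
    have mono: "\<forall>k<M \<epsilon>. p \<epsilon> k < p \<epsilon> (Suc k)" using gr(3) by (simp add: p_def M_def)
    have twoLeta: "2 * L * eta \<epsilon> = sqrt \<epsilon>" using L0 by (simp add: eta_def)
    have G1: "\<forall>k<M \<epsilon>. (2 * L * (p \<epsilon> (Suc k) - p \<epsilon> k))\<^sup>2 \<le> \<epsilon> * (1 + p \<epsilon> k ^ 4)"
    proof (intro allI impI)
      fix k assume k: "k < M \<epsilon>"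
      define u where "u = 2 * L * (p \<epsilon> (Suc k) - p \<epsilon> k)"
      have u0: "0 \<le> u" using mono k L0 by (simp add: u_def less_imp_le)
      have "p \<epsilon> (Suc k) - p \<epsilon> k \<le> eta \<epsilon> \<or> p \<epsilon> (Suc k) - p \<epsilon> k \<le> eta \<epsilon> * (p \<epsilon> k)\<^sup>2"
        using gr(4) k by (simp add: p_def M_def)
      then show "u\<^sup>2 \<le> \<epsilon> * (1 + p \<epsilon> k ^ 4)" unfolding u_def[symmetric]
      proof
        assume "p \<epsilon> (Suc k) - p \<epsilon> k \<le> eta \<epsilon>"
        then have "u \<le> sqrt \<epsilon> * 1" unfolding u_def twoLeta[symmetric] using L0
          by (simp add: mult_left_mono)
        then have "u\<^sup>2 \<le> \<epsilon> * 1\<^sup>2" using u0 e0 by (intro sq_le_helper) auto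
        moreover have "\<epsilon> * 1 \<le> \<epsilon> * (1 + p \<epsilon> k ^ 4)"
        proof -
          have "0 \<le> p \<epsilon> k" using p_mono[OF mono, of 0 k] p0 k by simp
          then have "0 \<le> p \<epsilon> k ^ 4" by (rule zero_le_power)
          then show ?thesis using e0 by (intro mult_left_mono) auto
        qed
        ultimately show ?thesis by simp
      next
        assume "p \<epsilon> (Suc k) - p \<epsilon> k \<le> eta \<epsilon> * (p \<epsilon> k)\<^sup>2"
        then have "2 * L * (p \<epsilon> (Suc k) - p \<epsilon> k) \<le> 2 * L * (eta \<epsilon> * (p \<epsilon> k)\<^sup>2)"
          using L0 by (intro mult_left_mono) auto
        also have "\<dots> = (2 * L * eta \<epsilon>) * (p \<epsilon> k)\<^sup>2" by (simp only: mult.assoc)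
        finally have "u \<le> sqrt \<epsilon> * (p \<epsilon> k)\<^sup>2" unfolding u_def twoLeta .
        then have "u\<^sup>2 \<le> \<epsilon> * ((p \<epsilon> k)\<^sup>2)\<^sup>2" using u0 e0 by (intro sq_le_helper) auto
        also have "\<dots> = \<epsilon> * p \<epsilon> k ^ 4" by (simp add: power_mult[symmetric])
        also have "\<dots> \<le> \<epsilon> * (1 + p \<epsilon> k ^ 4)" using e0 by simp
        finally show ?thesis .
      qed
    qed
    have G2: "L\<^sup>2 \<le> \<epsilon> * (p \<epsilon> (M \<epsilon>))\<^sup>2"
    proof -
      have pM0: "0 \<le> p \<epsilon> (M \<epsilon>)" using p_mono[OF mono, of 0 "M \<epsilon>"] p0 by simp
      have "1 \<le> 2 * eta \<epsilon> * p \<epsilon> (M \<epsilon>)" using gr(5) by (simp add: p_def M_def)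
      then have "L * 1 \<le> L * (2 * eta \<epsilon> * p \<epsilon> (M \<epsilon>))" using L0 by (intro mult_left_mono) auto
      also have "\<dots> = sqrt \<epsilon> * p \<epsilon> (M \<epsilon>)" using twoLeta by (simp add: algebra_simps)
      finally have "L \<le> sqrt \<epsilon> * p \<epsilon> (M \<epsilon>)" by simp
      then show ?thesis using L0 e0 by (intro sq_le_helper) auto
    qed
    have errf: "\<And>x. 0 \<le> x \<Longrightarrow> (f x - (f 0 + PL f (p \<epsilon>) (M \<epsilon>) x))\<^sup>2 \<le> \<epsilon> * (1 + x ^ 4)"
      by (rule PL_err[OF mono p0 lipf _ G1 G2]) (use L0 e0 in auto)
    have errg: "\<And>x. 0 \<le> x \<Longrightarrow> (fneg x - (fneg 0 + PL fneg (p \<epsilon>) (M \<epsilon>) x))\<^sup>2 \<le> \<epsilon> * (1 + x ^ 4)"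
      by (rule PL_err[OF mono p0 lipg _ G1 G2]) (use L0 e0 in auto)
    have negf: "\<And>x. x \<le> 0 \<Longrightarrow> PL f (p \<epsilon>) (M \<epsilon>) x = 0" by (rule PL_neg[OF mono p0])
    have negg: "\<And>x. x \<le> 0 \<Longrightarrow> PL fneg (p \<epsilon>) (M \<epsilon>) x = 0" by (rule PL_neg[OF mono p0])
    have F0: "F \<epsilon> 0 = f 0" by (simp add: F_def negf negg)
    have err: "\<bar>f w - F \<epsilon> w\<bar>\<^sup>2 \<le> \<epsilon> * (1 + \<bar>w\<bar> ^ 4)" for w
    proof (cases "0 \<le> w")
      case True
      have "F \<epsilon> w = f 0 + PL f (p \<epsilon>) (M \<epsilon>) w" using True by (simp add: F_def negg)
      then show ?thesis using errf[OF True] True by simp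
    next
      case False
      have "F \<epsilon> w = fneg 0 + PL fneg (p \<epsilon>) (M \<epsilon>) (- w)" using False by (simp add: F_def negf fneg_def)
      moreover have "f w = fneg (- w)" by (simp add: fneg_def)
      ultimately show ?thesis using errg[of "- w"] False by (simp add: power_abs[symmetric])
    qed
    have lip1: "\<bar>F \<epsilon> y - F \<epsilon> x\<bar> \<le> L * (y - x)" if xy: "x \<le> y" for x y
    proof -
      define C where "C = clampM (p \<epsilon> (M \<epsilon>))"
      have pM0: "0 \<le> p \<epsilon> (M \<epsilon>)" using p_mono[OF mono, of 0 "M \<epsilon>"] p0 by simp
      have a1: "\<bar>PL f (p \<epsilon>) (M \<epsilon>) y - PL f (p \<epsilon>) (M \<epsilon>) x\<bar> \<le> L * (C y - C x)"
        unfolding C_def by (rule PL_lip[OF mono p0 lipf xy])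
      have a2: "\<bar>PL fneg (p \<epsilon>) (M \<epsilon>) (-x) - PL fneg (p \<epsilon>) (M \<epsilon>) (-y)\<bar> \<le> L * (C (-x) - C (-y))"
        unfolding C_def by (rule PL_lip[OF mono p0 lipg]) (use xy in simp)
      have a3: "(C y - C x) + (C (-x) - C (-y)) \<le> y - x" unfolding C_def by (rule clamp_two[OF pM0 xy])
      have "\<bar>F \<epsilon> y - F \<epsilon> x\<bar> \<le> \<bar>PL f (p \<epsilon>) (M \<epsilon>) y - PL f (p \<epsilon>) (M \<epsilon>) x\<bar>
           + \<bar>PL fneg (p \<epsilon>) (M \<epsilon>) (-x) - PL fneg (p \<epsilon>) (M \<epsilon>) (-y)\<bar>"
      proof -
        have "F \<epsilon> y - F \<epsilon> x = (PL f (p \<epsilon>) (M \<epsilon>) y - PL f (p \<epsilon>) (M \<epsilon>) x)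
            - (PL fneg (p \<epsilon>) (M \<epsilon>) (-x) - PL fneg (p \<epsilon>) (M \<epsilon>) (-y))" by (simp add: F_def)
        then show ?thesis by (metis abs_triangle_ineq4)
      qed
      also have "\<dots> \<le> L * ((C y - C x) + (C (-x) - C (-y)))" using a1 a2 by (simp add: algebra_simps)
      also have "\<dots> \<le> L * (y - x)" using a3 L0 by (intro mult_left_mono) auto
      finally show ?thesis .
    qed
    have lip: "\<bar>F \<epsilon> w1 - F \<epsilon> w2\<bar>\<^sup>2 \<le> c * \<bar>w1 - w2\<bar>\<^sup>2" for w1 w2
    proof -
      have "\<bar>F \<epsilon> w1 - F \<epsilon> w2\<bar> \<le> L * \<bar>w1 - w2\<bar>"
      proof (cases "w2 \<le> w1")
        case True then show ?thesis using lip1[OF True] by simp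
      next
        case False then show ?thesis using lip1[of w1 w2] by (simp add: abs_minus_commute)
      qed
      then have "\<bar>F \<epsilon> w1 - F \<epsilon> w2\<bar>\<^sup>2 \<le> (L * \<bar>w1 - w2\<bar>)\<^sup>2" by (intro power_mono) auto
      also have "\<dots> = c * \<bar>w1 - w2\<bar>\<^sup>2" using Lsq by (simp add: power_mult_distrib)
      finally show ?thesis .
    qed
    have cont: "continuous_on UNIV (F \<epsilon>)"
      unfolding F_def PL_def clip_def by (intro continuous_intros)
    have valid: "nn_valid (\<Phi> \<epsilon>)" using M1 by (simp add: \<Phi>_def net1_valid)
    have dims: "nn_dims (\<Phi> \<epsilon>) = [1, 4 * M \<epsilon>, 1]" by (simp add: \<Phi>_def net1_dims)
    have scal: "nn_realizes_scalar (\<Phi> \<epsilon>) (F \<epsilon>)"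
      unfolding nn_realizes_scalar_def using Freal dims by simp
    have maxd: "real (Max (set (nn_dims (\<Phi> \<epsilon>)))) = 4 * real (M \<epsilon>)"
      using M1 dims by (simp add: max_def)
    have bL: "64 * (1 + 2 * L) \<le> b"
    proof -
      have cp: "c powr (1/2) = L" using c by (simp add: L_def powr_half_sqrt)
      have cL: "c = L * L" using Lsq by (simp add: power2_eq_square)
      have X': "c powr (1/2) * (4 * c powr (1/2) + 2 * c powr (1/2) * T powr (-3/2)) = 4 * c + 2 * c * T powr (-3/2)"
        unfolding cp by (simp add: cL algebra_simps)
      define t where "t = T powr (-3/2)"
      have t0: "0 \<le> t" by (simp add: t_def)
      have X: "c powr (1/2) * (4 * c powr (1/2) + 2 * c powr (1/2) * T powr (-3/2)) = 4 * c + 2 * c * t"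
        using X' by (simp add: t_def)
      have X0: "0 \<le> 4 * c + 2 * c * t" using c t0 by simp
      have "\<bar>4 * c + 2 * c * t\<bar> powr (1/2) = sqrt (4 * c + 2 * c * t)" using X0 by (simp add: powr_half_sqrt)
      also have "\<dots> \<ge> sqrt (4 * c)" using c t0 by (intro real_sqrt_le_mono) simp
      also have "sqrt (4 * c) = 2 * L" by (simp add: L_def real_sqrt_mult)
      finally have "2 * L \<le> \<bar>4 * c + 2 * c * t\<bar> powr (1/2)" .
      then show ?thesis unfolding b_def X by simp
    qed
    have cnt: "4 * real (M \<epsilon>) \<le> b * \<epsilon> powr (-2) / 4"
    proof -
      define s where "s = sqrt \<epsilon>"
      have s0: "0 < s" "s < 1" using e0 by (auto simp: s_def)
      define qq where "qq = 1 / s"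
      have q1: "1 \<le> qq" using s0 by (simp add: qq_def)
      have epsq: "\<epsilon> powr (-2) = qq ^ 4"
      proof -
        have "\<epsilon> = s ^ 2" using e0 by (simp add: s_def)
        then have "\<epsilon> powr (-2) = 1 / (s ^ 2) ^ 2" using e0 by (simp add: powr_minus_divide powr_numeral)
        then show ?thesis by (simp add: qq_def power_one_over power_mult[symmetric])
      qed
      have q4: "qq \<le> qq ^ 4" using q1 by (simp add: power_increasing[of 1 4 qq, simplified])
      have "real (M \<epsilon>) \<le> 3 / eta \<epsilon> + 1" using gr(6) by (simp add: M_def)
      also have "3 / eta \<epsilon> = 6 * L * qq" using L0 e0 by (simp add: eta_def qq_def s_def)
      finally have "4 * real (M \<epsilon>) \<le> 24 * L * qq + 4" by simp
      also have "\<dots> \<le> 32 * L * qq ^ 4 + 16 * qq ^ 4"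
      proof -
        have "24 * L * qq \<le> 32 * L * qq" using L0 q1 by simp
        also have "\<dots> \<le> 32 * L * qq ^ 4" using L0 q4 by simp
        finally have h1: "24 * L * qq \<le> 32 * L * qq ^ 4" .
        have "1 \<le> qq ^ 4" using q1 q4 by simp
        then show ?thesis using h1 by simp
      qed
      also have "\<dots> = 64 * (1 + 2 * L) * qq ^ 4 / 4" by (simp add: algebra_simps)
      also have "\<dots> \<le> b * qq ^ 4 / 4" using bL by (intro divide_right_mono mult_right_mono) auto
      finally show ?thesis using epsq by simp
    qed
    show ?thesis using cont valid scal dims maxd cnt lip err F0 by simp
  qed
  have b16: "16 \<le> b / 4"
  proof -
    have "0 \<le> \<bar>c powr (1/2) * (4 * c powr (1/2) + 2 * c powr (1/2) * T powr (-3/2))\<bar> powr (1/2)" by simp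
    then show ?thesis unfolding b_def by simp
  qed
  have thr: "3 \<le> b * real d powr c * \<epsilon> powr (-c) / 4" if "1 \<le> d" "\<epsilon> \<in> {0<..<1}" for d \<epsilon>
  proof -
    have d1: "1 \<le> real d powr c" using that c by (intro ge_one_powr_ge_zero) auto
    have "\<epsilon> powr c \<le> 1 powr c" using that c by (intro powr_mono2) auto
    then have "\<epsilon> powr c \<le> 1" by simp
    moreover have "0 < \<epsilon> powr c" using that by simp
    ultimately have e1: "1 \<le> \<epsilon> powr (-c)" by (simp add: powr_minus_divide)
    have "1 \<le> real d powr c * \<epsilon> powr (-c)" using mult_mono[OF d1 e1] by simp
    then have "b / 4 * 1 \<le> b / 4 * (real d powr c * \<epsilon> powr (-c))" using b16 by (intro mult_left_mono) auto
    moreover have "b * real d powr c * \<epsilon> powr (-c) / 4 = b / 4 * (real d powr c * \<epsilon> powr (-c))" by simp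
    ultimately show ?thesis using b16 by linarith
  qed
  have f0: "T ^ 3 * \<bar>f 0\<bar> \<le> c * real d powr c" if "1 \<le> d" for d
  proof -
    have nn: "0 \<le> T * \<bar>g' d vzero\<bar>\<^sup>2" for g' :: "nat \<Rightarrow> (nat \<Rightarrow> real) \<Rightarrow> real" using T by simp
    have "ennreal (T ^ 3 * (\<bar>f 0\<bar> + 1)\<^sup>2 + T * \<bar>g d vzero\<bar>\<^sup>2) \<le> ennreal (c * real d powr c)"
      by (rule order_trans[OF _ A3_0[OF that]], rule add_increasing) auto
    then have "T ^ 3 * (\<bar>f 0\<bar> + 1)\<^sup>2 + T * \<bar>g d vzero\<bar>\<^sup>2 \<le> c * real d powr c"
      using c by (subst (asm) ennreal_le_iff) auto
    moreover have "T ^ 3 * \<bar>f 0\<bar> \<le> T ^ 3 * (\<bar>f 0\<bar> + 1)\<^sup>2"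
    proof -
      have "\<bar>f 0\<bar> \<le> (\<bar>f 0\<bar> + 1)\<^sup>2"
      proof -
        have "0 \<le> \<bar>f 0\<bar> * \<bar>f 0\<bar>" by simp
        moreover have "(\<bar>f 0\<bar> + 1)\<^sup>2 = \<bar>f 0\<bar> * \<bar>f 0\<bar> + 2 * \<bar>f 0\<bar> + 1" by (simp add: power2_eq_square algebra_simps)
        ultimately show ?thesis by simp
      qed
      then show ?thesis using T by (intro mult_left_mono) auto
    qed
    ultimately show ?thesis using nn[of g] by linarith
  qed
  show ?thesis
    apply (rule exI[of _ F], rule exI[of _ \<Phi>])
    using main thr f0 by auto
qed

end
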